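(* Let $0<p\le\infty$, $E=\mathcal{L}^p(I)$, and suppose $\alpha_n(t)\in\{\Lambda,-\Lambda\}$ for all $n=1,\dots,N$ and all $t\in I$. Then the operator $\mathcal{P}_0^1:E\to E$, $\mathcal{P}_0^1(b):=0*_Tb$, has closed range.
   Context: Let $N\ge 2$, $I=[x_0,x_N]$, $\Delta: x_0<\dots<x_N$ a partition, $L_n(x)=a_nx+b_n$ affine with $L_n(x_0)=x_{n-1}$, $L_n(x_N)=x_n$, $I_1=[x_0,x_1]$, $I_n=(x_{n-1},x_n]$ for $n\ge2$, and $\alpha=(\alpha_1,\dots,\alpha_N)\in(\mathcal{L}^\infty(I))^N$ with $\Lambda:=\operatorname{ess\,sup}\{|\alpha_n(x)|:x\in I,n=1,\dots,N\}<1$. For $f,b\in E$, $f*_Tb$ is the unique fixed point in $E$ of the contraction $Tg(x):=f(x)+\alpha_n(L_n^{-1}(x))(g-b)(L_n^{-1}(x))$, $x\in I_n$; $0$ is the null function. *)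

theory Defs
  imports "HOL-Analysis.Analysis"
begin

definition Ival :: "(nat \<Rightarrow> real) \<Rightarrow> nat \<Rightarrow> real set" where
  "Ival x N = {x 0 .. x N}"

definition Isub :: "(nat \<Rightarrow> real) \<Rightarrow> nat \<Rightarrow> real set" where
  "Isub x n = (if n = 1 then {x 0 .. x 1} else {x (n - 1) <.. x n})"

text \<open>L_n(t) = a_n t + b_n with L_n(x_0) = x_{n-1}, L_n(x_N) = x_n.\<close>
definition La :: "(nat \<Rightarrow> real) \<Rightarrow> nat \<Rightarrow> nat \<Rightarrow> real" where
  "La x N n = (x n - x (n - 1)) / (x N - x 0)"

definition Lb :: "(nat \<Rightarrow> real) \<Rightarrow> nat \<Rightarrow> nat \<Rightarrow> real" where
  "Lb x N n = x (n - 1) - La x N n * x 0"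

definition Lmap :: "(nat \<Rightarrow> real) \<Rightarrow> nat \<Rightarrow> nat \<Rightarrow> real \<Rightarrow> real" where
  "Lmap x N n t = La x N n * t + Lb x N n"

definition Linv :: "(nat \<Rightarrow> real) \<Rightarrow> nat \<Rightarrow> nat \<Rightarrow> real \<Rightarrow> real" where
  "Linv x N n y = (y - Lb x N n) / La x N n"

text \<open>The space L^p(S) (0 < p \<le> \<infinity>), as a set of representatives; elements that agree
  a.e. represent the same element of L^p.\<close>
definition Lp_space :: "ennreal \<Rightarrow> real set \<Rightarrow> (real \<Rightarrow> real) set" where
  "Lp_space p S = {f. f \<in> borel_measurable (lebesgue_on S) \<and>
     (if p = \<infinity> then (\<exists>C. AE t in lebesgue_on S. \<bar>f t\<bar> \<le> C)
      else (\<integral>\<^sup>+ t. ennreal (\<bar>f t\<bar> powr enn2real p) \<partial>lebesgue_on S) < \<infinity>)}"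

text \<open>Convergence in L^p(S): for p < \<infinity>, \<integral>|F_k - g|^p \<rightarrow> 0 (this is the standard
  (quasi-)metric for 0 < p < 1 and the p-th power of the norm for p \<ge> 1);
  for p = \<infinity>, ess sup |F_k - g| \<rightarrow> 0.\<close>
definition Lp_conv :: "ennreal \<Rightarrow> real set \<Rightarrow> (nat \<Rightarrow> real \<Rightarrow> real) \<Rightarrow> (real \<Rightarrow> real) \<Rightarrow> bool" where
  "Lp_conv p S F g =
     (if p = \<infinity> then
        (\<forall>e>0. eventually (\<lambda>k. AE t in lebesgue_on S. \<bar>F k t - g t\<bar> \<le> e) sequentially)
      else
        ((\<lambda>k. \<integral>\<^sup>+ t. ennreal (\<bar>F k t - g t\<bar> powr enn2real p) \<partial>lebesgue_on S) \<longlongrightarrow> 0) sequentially)"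

text \<open>g represents f *_T b in E = L^p(I): g \<in> E and g = T g a.e. on I, where
  T g(t) = f(t) + \<alpha>_n(L_n^{-1} t) (g - b)(L_n^{-1} t) for t \<in> I_n.\<close>
definition is_fractal :: "ennreal \<Rightarrow> (nat \<Rightarrow> real) \<Rightarrow> nat \<Rightarrow> (nat \<Rightarrow> real \<Rightarrow> real)
    \<Rightarrow> (real \<Rightarrow> real) \<Rightarrow> (real \<Rightarrow> real) \<Rightarrow> (real \<Rightarrow> real) \<Rightarrow> bool" where
  "is_fractal p x N \<alpha> f b g \<longleftrightarrow>
     g \<in> Lp_space p (Ival x N) \<and>
     (\<forall>n\<in>{1..N}. AE t in lebesgue_on (Ival x N).
        t \<in> Isub x n \<longrightarrow>
        g t = f t + \<alpha> n (Linv x N n t) * (g (Linv x N n t) - b (Linv x N n t)))"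

end

theory Submission
  imports Defs
begin


lemma aff_meas: "(c::real) \<noteq> 0 \<Longrightarrow> (\<lambda>s. d + c * s) \<in> lebesgue \<rightarrow>\<^sub>M lebesgue"
  using lebesgue_affine_measurable[where c="\<lambda>_::real. c" and t=d] by simp

lemma AE_aff:
  fixes c d :: real
  assumes c: "c \<noteq> 0" and h: "AE t in lebesgue. P t"
  shows "AE s in lebesgue. P (d + c * s)"
proof -
  from h obtain N where N: "{x \<in> space lebesgue. \<not> P x} \<subseteq> N" "emeasure lebesgue N = 0" "N \<in> sets lebesgue"
    by (rule AE_E)
  have h1: "AE t in lebesgue. t \<notin> N" using N by (intro AE_not_in) auto
  have eq: "lebesgue = density (distr lebesgue lebesgue (\<lambda>x. d + c * x)) (\<lambda>_. ennreal (abs c))"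
    using lebesgue_real_affine[OF c] by blast
  have "AE t in density (distr lebesgue lebesgue (\<lambda>x. d + c * x)) (\<lambda>_. ennreal (abs c)). t \<notin> N"
    using h1 eq by metis
  then have "AE t in distr lebesgue lebesgue (\<lambda>x. d + c * x). t \<notin> N"
    using c by (subst (asm) AE_density) auto
  then have "AE s in lebesgue. d + c * s \<notin> N"
  proof -
    have m: "{x \<in> space lebesgue. x \<notin> N} \<in> sets lebesgue"
      using sets.compl_sets[OF N(3)] by (simp add: set_diff_eq)
    show ?thesis using \<open>AE t in distr lebesgue lebesgue (\<lambda>x. d + c * x). t \<notin> N\<close>
      by (subst (asm) AE_distr_iff[OF aff_meas[OF c] m]) auto
  qed
  then show ?thesis
    by eventually_elim (use N(1) in auto)
qed

lemma AE_aff_on: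
  fixes c d a b :: real
  assumes c: "c \<noteq> 0" and h: "AE t in lebesgue_on {a..b}. P t"
  shows "AE s in lebesgue_on {a..b}. d + c * s \<in> {a..b} \<longrightarrow> P (d + c * s)"
proof -
  have "AE t in lebesgue. t \<in> {a..b} \<longrightarrow> P t"
    using h by (subst (asm) AE_restrict_space_iff) auto
  from AE_aff[OF c this, of d] show ?thesis
    by (subst AE_restrict_space_iff) (auto elim: eventually_mono)
qed

lemma meas_aff_on:
  fixes c d a b :: real
  assumes c: "c \<noteq> 0" and maps: "\<And>s. s \<in> {a..b} \<Longrightarrow> d + c * s \<in> {a..b}"
    and f: "f \<in> lebesgue_on {a..b} \<rightarrow>\<^sub>M M"
  shows "(\<lambda>s. f (d + c * s)) \<in> lebesgue_on {a..b} \<rightarrow>\<^sub>M M"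
proof -
  have "(\<lambda>s. d + c * s) \<in> lebesgue_on {a..b} \<rightarrow>\<^sub>M lebesgue_on {a..b}"
    using maps by (intro measurable_restrict_space3[OF aff_meas[OF c]]) auto
  from measurable_compose[OF this f] show ?thesis by simp
qed

lemma nn_aff_on:
  fixes c d a b :: real and f :: "real \<Rightarrow> ennreal"
  assumes c: "c \<noteq> 0" and maps: "\<And>s. s \<in> {a..b} \<Longrightarrow> d + c * s \<in> {a..b}"
    and f: "f \<in> borel_measurable (lebesgue_on {a..b})"
  shows "(\<integral>\<^sup>+ s. f (d + c * s) \<partial>lebesgue_on {a..b}) \<le> ennreal (1 / \<bar>c\<bar>) * (\<integral>\<^sup>+ t. f t \<partial>lebesgue_on {a..b})"
proof -
  define F where "F t = f t * indicator {a..b} t" for t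
  have F: "F \<in> borel_measurable lebesgue"
    using f unfolding F_def by (subst (asm) borel_measurable_restrict_space_iff_ennreal) auto
  have "(\<integral>\<^sup>+ s. f (d + c * s) \<partial>lebesgue_on {a..b}) = (\<integral>\<^sup>+ s. f (d + c * s) * indicator {a..b} s \<partial>lebesgue)"
    by (subst nn_integral_restrict_space) auto
  also have "\<dots> \<le> (\<integral>\<^sup>+ s. F (d + c * s) \<partial>lebesgue)"
  proof (intro nn_integral_mono)
    fix s show "f (d + c * s) * indicator {a..b} s \<le> F (d + c * s)"
      using maps[of s] by (cases "s \<in> {a..b}") (auto simp: F_def)
  qed
  also have "\<dots> = ennreal (1 / \<bar>c\<bar>) * (ennreal \<bar>c\<bar> * (\<integral>\<^sup>+ s. F (d + c * s) \<partial>lebesgue))"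
    using c by (simp add: ennreal_mult[symmetric] mult.assoc[symmetric])
  also have "\<dots> = ennreal (1 / \<bar>c\<bar>) * (\<integral>\<^sup>+ t. F t \<partial>lebesgue)"
    using nn_integral_real_affine_lebesgue[OF F c, of d] by simp
  also have "(\<integral>\<^sup>+ t. F t \<partial>lebesgue) = (\<integral>\<^sup>+ t. f t \<partial>lebesgue_on {a..b})"
    unfolding F_def by (subst nn_integral_restrict_space) auto
  finally show ?thesis .
qed



lemma xmono:
  assumes "\<And>i. i < N \<Longrightarrow> x i < x (Suc i)" "i < j" "j \<le> N"
  shows "(x::nat\<Rightarrow>real) i < x j"
  using assms(2,3)
proof (induction j)
  case 0 then show ?case by simp
next
  case (Suc j)
  show ?case
  proof (cases "i = j")
    case True then show ?thesis using assms(1) Suc by simp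
  next
    case False then have "x i < x j" using Suc by simp
    also have "\<dots> < x (Suc j)" using assms(1) Suc by simp
    finally show ?thesis .
  qed
qed

lemma part_facts:
  fixes x :: "nat \<Rightarrow> real"
  assumes xinc: "\<And>i. i < N \<Longrightarrow> x i < x (Suc i)" and n: "n \<in> {1..N}"
  shows La_pos: "La x N n > 0"
    and Lmap_eq: "Lmap x N n s = x (n - 1) + La x N n * (s - x 0)"
    and Lmap_aff: "Lmap x N n s = Lb x N n + La x N n * s"
    and Linv_aff: "Linv x N n t = (- Lb x N n / La x N n) + (1 / La x N n) * t"
    and Linv_Lmap: "Linv x N n (Lmap x N n s) = s"
    and Lmap_Linv: "Lmap x N n (Linv x N n t) = t"
    and Lmap_in: "s \<in> {x 0..x N} \<Longrightarrow> Lmap x N n s \<in> {x 0..x N}"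
    and Lmap_Isub: "s \<in> {x 0..x N} \<Longrightarrow> s \<noteq> x 0 \<Longrightarrow> Lmap x N n s \<in> Isub x n"
    and Linv_in: "t \<in> Isub x n \<Longrightarrow> Linv x N n t \<in> {x 0..x N}"
proof -
  have n1: "1 \<le> n" "n \<le> N" using n by auto
  have x0N: "x 0 < x N" using xmono[of N x, OF xinc, of 0 N] n1 by simp
  have xn1: "x (n - 1) < x n" using xmono[of N x, OF xinc, of "n-1" n] n1 by simp
  have le1: "x 0 \<le> x (n - 1)"
    using xmono[of N x, OF xinc, of 0 "n-1"] n1 by (cases "n - 1 = 0") (auto, linarith)
  have le2: "x n \<le> x N"
    using xmono[of N x, OF xinc, of n N] n1 by (cases "n = N") auto
  show Lpos: "La x N n > 0" unfolding La_def using x0N xn1 by simp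
  show Leq: "Lmap x N n s = x (n - 1) + La x N n * (s - x 0)" for s
    unfolding Lmap_def Lb_def by (simp add: algebra_simps)
  show "Lmap x N n s = Lb x N n + La x N n * s" unfolding Lmap_def by simp
  show "Linv x N n t = (- Lb x N n / La x N n) + (1 / La x N n) * t"
    unfolding Linv_def by (simp add: diff_divide_distrib)
  show "Linv x N n (Lmap x N n s) = s" unfolding Linv_def Lmap_def using Lpos by simp
  show LL: "Lmap x N n (Linv x N n t) = t" for t unfolding Linv_def Lmap_def using Lpos by simp
  have La_eq: "La x N n * (x N - x 0) = x n - x (n - 1)" unfolding La_def using x0N by simp
  have rng: "x (n - 1) \<le> Lmap x N n s \<and> Lmap x N n s \<le> x n" if "s \<in> {x 0..x N}" for s
  proof -
    have "0 \<le> La x N n * (s - x 0)" using that Lpos by simp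
    moreover have "La x N n * (s - x 0) \<le> La x N n * (x N - x 0)"
      using that Lpos by (intro mult_left_mono) auto
    ultimately show ?thesis using La_eq Leq[of s] by simp
  qed
  show "s \<in> {x 0..x N} \<Longrightarrow> Lmap x N n s \<in> {x 0..x N}"
    using rng[of s] le1 le2 by auto
  show "Lmap x N n s \<in> Isub x n" if "s \<in> {x 0..x N}" "s \<noteq> x 0"
  proof -
    have "0 < La x N n * (s - x 0)" using that Lpos by simp
    then show ?thesis using rng[OF that(1)] Leq[of s] unfolding Isub_def
      by (cases "n = 1") auto
  qed
  show "Linv x N n t \<in> {x 0..x N}" if "t \<in> Isub x n"
  proof -
    have t: "x (n - 1) \<le> t" "t \<le> x n" using that unfolding Isub_def
      by (auto split: if_splits)
    have e: "Linv x N n t = x 0 + (t - x (n - 1)) / La x N n"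
      using LL[of t] Leq[of "Linv x N n t"] Lpos by (simp add: field_simps)
    have "(t - x (n - 1)) / La x N n \<le> (x n - x (n - 1)) / La x N n"
      using t Lpos by (intro divide_right_mono) auto
    also have "\<dots> = x N - x 0" using La_eq Lpos by (simp add: field_simps)
    finally show ?thesis using e t Lpos by simp
  qed
qed

lemma powr_sum_le:
  fixes u v q :: real assumes "0 \<le> u" "0 \<le> v" "0 < q"
  shows "(u + v) powr q \<le> 2 powr q * (u powr q + v powr q)"
proof -
  have "(u + v) powr q \<le> (2 * max u v) powr q"
    using assms by (intro powr_mono2) auto
  also have "\<dots> = 2 powr q * max u v powr q" using assms by (simp add: powr_mult)
  also have "max u v powr q \<le> u powr q + v powr q"
    by (cases "u \<le> v") (auto simp: max_def)
  then have "2 powr q * max u v powr q \<le> 2 powr q * (u powr q + v powr q)"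
    by (intro mult_left_mono) auto
  finally show ?thesis .
qed



theorem proposition6p3:
  fixes p :: ennreal and x :: "nat \<Rightarrow> real" and N :: nat
    and \<alpha> :: "nat \<Rightarrow> real \<Rightarrow> real" and \<Lambda> :: real
  assumes N2: "N \<ge> 2"
    and xinc: "\<And>i. i < N \<Longrightarrow> x i < x (Suc i)"
    and p_pos: "0 < p"
    and Lam: "0 \<le> \<Lambda>" "\<Lambda> < 1"
    and alpha_meas: "\<And>n. n \<in> {1..N} \<Longrightarrow> \<alpha> n \<in> borel_measurable (lebesgue_on (Ival x N))"
    and alpha_vals: "\<And>n t. n \<in> {1..N} \<Longrightarrow> t \<in> Ival x N \<Longrightarrow> \<alpha> n t \<in> {\<Lambda>, -\<Lambda>}"
  shows "\<forall>B G g. (\<forall>k. B k \<in> Lp_space p (Ival x N))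
            \<longrightarrow> (\<forall>k. is_fractal p x N \<alpha> (\<lambda>_. 0) (B k) (G k))
            \<longrightarrow> g \<in> Lp_space p (Ival x N)
            \<longrightarrow> Lp_conv p (Ival x N) G g
            \<longrightarrow> (\<exists>b \<in> Lp_space p (Ival x N). is_fractal p x N \<alpha> (\<lambda>_. 0) b g)"
proof (intro allI impI)
  fix B G g
  assume BL: "\<forall>k. B k \<in> Lp_space p (Ival x N)"
    and GF: "\<forall>k. is_fractal p x N \<alpha> (\<lambda>_. 0) (B k) (G k)"
    and gL: "g \<in> Lp_space p (Ival x N)"
    and conv: "Lp_conv p (Ival x N) G g"
  define I where "I = {x 0..x N}"
  have IvI: "Ival x N = I" unfolding I_def Ival_def ..
  define L where "L n s = Lmap x N n s" for n s
  define Li where "Li n t = Linv x N n t" for n t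
  have one: "1 \<in> {1..N}" using N2 by simp
  have Le: "L n = (\<lambda>s. Lb x N n + La x N n * s)" if "n \<in> {1..N}" for n
    using part_facts(3)[of N x, OF xinc that] by (auto simp: L_def)
  have Lie: "Li n = (\<lambda>s. - Lb x N n / La x N n + 1 / La x N n * s)" if "n \<in> {1..N}" for n
    using part_facts(4)[of N x, OF xinc that] by (auto simp: Li_def)
  have comp_meas: "(\<lambda>s. h (L n s)) \<in> borel_measurable (lebesgue_on I)"
    if "n \<in> {1..N}" "h \<in> borel_measurable (lebesgue_on I)" for n and h :: "real \<Rightarrow> 'b::topological_space"
    unfolding Le[OF that(1)] I_def
    by (rule meas_aff_on) (use part_facts[of N x, OF xinc that(1)] that(2) I_def in \<open>auto simp: Lmap_aff\<close>)
  have AEcomp: "AE s in lebesgue_on I. P (L n s)"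
    if "n \<in> {1..N}" "AE t in lebesgue_on I. P t" for n P
  proof -
    have "AE s in lebesgue_on I. L n s \<in> I \<longrightarrow> P (L n s)"
      unfolding Le[OF that(1)] I_def
      by (rule AE_aff_on) (use part_facts[of N x, OF xinc that(1)] that(2) I_def in auto)
    moreover have "AE s in lebesgue_on I. s \<in> I" using AE_space[of "lebesgue_on I"] by simp
    ultimately show ?thesis
      by eventually_elim (use part_facts(7)[of N x, OF xinc that(1)] in \<open>auto simp: L_def I_def\<close>)
  qed
  have AEinv: "AE t in lebesgue_on I. t \<in> Isub x n \<longrightarrow> P (Li n t)"
    if "n \<in> {1..N}" "AE s in lebesgue_on I. P s" for n P
  proof -
    have "AE t in lebesgue_on I. Li n t \<in> I \<longrightarrow> P (Li n t)"
      unfolding Lie[OF that(1)] I_def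
      by (rule AE_aff_on) (use part_facts[of N x, OF xinc that(1)] that(2) I_def in auto)
    then show ?thesis
      by eventually_elim (use part_facts(9)[of N x, OF xinc that(1)] in \<open>auto simp: Li_def I_def\<close>)
  qed
  have nncomp: "(\<integral>\<^sup>+ s. f (L n s) \<partial>lebesgue_on I) \<le> ennreal (1 / La x N n) * (\<integral>\<^sup>+ t. f t \<partial>lebesgue_on I)"
    if "n \<in> {1..N}" "f \<in> borel_measurable (lebesgue_on I)" for n f
  proof -
    have "(\<integral>\<^sup>+ s. f (L n s) \<partial>lebesgue_on I) \<le> ennreal (1 / \<bar>La x N n\<bar>) * (\<integral>\<^sup>+ t. f t \<partial>lebesgue_on I)"
      unfolding Le[OF that(1)] I_def
      by (rule nn_aff_on) (use part_facts[of N x, OF xinc that(1)] that(2) I_def in \<open>auto simp: Lmap_aff\<close>)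
    then show ?thesis using part_facts(1)[of N x, OF xinc that(1)] by simp
  qed
  have AEsp: "AE s in lebesgue_on I. s \<in> I" using AE_space[of "lebesgue_on I"] by simp
  have AEx0: "AE s in lebesgue_on I. s \<noteq> x 0"
  proof -
    have "AE s in lebesgue. s \<notin> {x 0}" by (intro AE_not_in) simp
    then show ?thesis unfolding I_def
      by (subst AE_restrict_space_iff) (auto elim: eventually_mono)
  qed
  have avals: "\<alpha> n s \<in> {\<Lambda>, -\<Lambda>}" if "n \<in> {1..N}" "s \<in> I" for n s
    using alpha_vals[OF that(1)] that(2) IvI by auto
  define c where "c n s = \<alpha> n s / \<alpha> 1 s" for n s
  have cbound: "\<bar>c n s\<bar> \<le> 1" if "n \<in> {1..N}" "s \<in> I" for n s
    using avals[OF that] avals[OF one that(2)] Lam unfolding c_def by (auto simp: abs_if)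
  have Gmeas: "G k \<in> borel_measurable (lebesgue_on I)" for k
    using GF unfolding is_fractal_def Lp_space_def IvI by auto
  have gmeas: "g \<in> borel_measurable (lebesgue_on I)"
    using gL unfolding Lp_space_def IvI by auto
  have stepA0: "AE s in lebesgue_on I. G k (L n s) = \<alpha> n s * (G k s - B k s)"
    if n: "n \<in> {1..N}" for k n
  proof -
    have "AE t in lebesgue_on I. t \<in> Isub x n \<longrightarrow> G k t = 0 + \<alpha> n (Linv x N n t) * (G k (Linv x N n t) - B k (Linv x N n t))"
      using GF n unfolding is_fractal_def IvI by auto
    from AEcomp[OF n this] AEsp AEx0 show ?thesis
      by eventually_elim (use part_facts[of N x, OF xinc n] in \<open>auto simp: L_def I_def\<close>)
  qed
  have stepA: "AE s in lebesgue_on I. G k (L n s) = c n s * G k (L 1 s)"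
    if n: "n \<in> {1..N}" for k n
    using stepA0[OF n, of k] stepA0[OF one, of k] AEsp
  proof eventually_elim
    case (elim s)
    show ?case
    proof (cases "\<alpha> 1 s = 0")
      case True
      then have "\<Lambda> = 0" using avals[OF one elim(3)] by auto
      then have "\<alpha> n s = 0" using avals[OF n elim(3)] by auto
      then show ?thesis using elim True by (simp add: c_def)
    next
      case False
      then show ?thesis using elim by (simp add: c_def)
    qed
  qed
  have am: "\<alpha> n \<in> borel_measurable (lebesgue_on I)" if "n \<in> {1..N}" for n
    using alpha_meas[OF that] IvI by simp
  have cm: "c n \<in> borel_measurable (lebesgue_on I)" if "n \<in> {1..N}" for n
    unfolding c_def using am[OF that] am[OF one] by (intro borel_measurable_divide) auto
  have Dm: "(\<lambda>s. g (L n s) - c n s * g (L 1 s)) \<in> borel_measurable (lebesgue_on I)"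
    if "n \<in> {1..N}" for n
    using comp_meas[OF that gmeas] comp_meas[OF one gmeas] cm[OF that]
    by (intro borel_measurable_diff borel_measurable_times) auto
  have Dbound: "AE s in lebesgue_on I. \<bar>g (L n s) - c n s * g (L 1 s)\<bar>
      \<le> \<bar>G k (L n s) - g (L n s)\<bar> + \<bar>G k (L 1 s) - g (L 1 s)\<bar>"
    if n: "n \<in> {1..N}" for n k
    using stepA[OF n, of k] AEsp
  proof eventually_elim
    case (elim s)
    have cb: "\<bar>c n s\<bar> \<le> 1" using cbound[OF n elim(2)] .
    have "g (L n s) - c n s * g (L 1 s) = (g (L n s) - G k (L n s)) + c n s * (G k (L 1 s) - g (L 1 s))"
      using elim(1) by (simp add: algebra_simps)
    also have "\<bar>\<dots>\<bar> \<le> \<bar>G k (L n s) - g (L n s)\<bar> + \<bar>c n s\<bar> * \<bar>G k (L 1 s) - g (L 1 s)\<bar>"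
      by (metis abs_minus_commute abs_mult abs_triangle_ineq)
    also have "\<bar>c n s\<bar> * \<bar>G k (L 1 s) - g (L 1 s)\<bar> \<le> \<bar>G k (L 1 s) - g (L 1 s)\<bar>"
      using cb by (simp add: mult_left_le_one_le)
    finally show ?case by simp
  qed
  have limit: "AE s in lebesgue_on I. g (L n s) = c n s * g (L 1 s)" if n: "n \<in> {1..N}" for n
  proof (cases "p = \<infinity>")
    case True
    have "AE s in lebesgue_on I. \<bar>g (L n s) - c n s * g (L 1 s)\<bar> \<le> 2 / real (Suc m)" for m
    proof -
      have "eventually (\<lambda>k. AE t in lebesgue_on I. \<bar>G k t - g t\<bar> \<le> 1 / real (Suc m)) sequentially"
        using conv True unfolding Lp_conv_def IvI by auto
      then obtain k where k: "AE t in lebesgue_on I. \<bar>G k t - g t\<bar> \<le> 1 / real (Suc m)"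
        unfolding eventually_sequentially by auto
      from Dbound[OF n, of k] AEcomp[OF n k] AEcomp[OF one k] show ?thesis
        by eventually_elim simp
    qed
    then have "AE s in lebesgue_on I. \<forall>m. \<bar>g (L n s) - c n s * g (L 1 s)\<bar> \<le> 2 / real (Suc m)"
      by (subst AE_all_countable) auto
    then show ?thesis
    proof eventually_elim
      case (elim s)
      show ?case
      proof (rule ccontr)
        assume "g (L n s) \<noteq> c n s * g (L 1 s)"
        then have "0 < \<bar>g (L n s) - c n s * g (L 1 s)\<bar> / 2" by simp
        then obtain m where "inverse (real (Suc m)) < \<bar>g (L n s) - c n s * g (L 1 s)\<bar> / 2"
          using reals_Archimedean by blast
        with elim[rule_format, of m] show False by (simp add: field_simps)
      qed
    qed
  next
    case False
    define q where "q = enn2real p"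
    have q: "0 < q" unfolding q_def using False p_pos by (simp add: enn2real_positive_iff top.not_eq_extremum)
    define S where "S k = (\<integral>\<^sup>+ t. ennreal (\<bar>G k t - g t\<bar> powr q) \<partial>lebesgue_on I)" for k
    have S0: "S \<longlonglongrightarrow> 0" using conv False unfolding Lp_conv_def IvI S_def q_def by simp
    define K where "K = ennreal (2 powr q) * (ennreal (1 / La x N n) + ennreal (1 / La x N 1))"
    define X where "X = (\<integral>\<^sup>+ s. ennreal (\<bar>g (L n s) - c n s * g (L 1 s)\<bar> powr q) \<partial>lebesgue_on I)"
    have Fm: "(\<lambda>t. ennreal (\<bar>G k t - g t\<bar> powr q)) \<in> borel_measurable (lebesgue_on I)" for k
      using Gmeas[of k] gmeas by measurable
    have XK: "X \<le> K * S k" for k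
    proof -
      let ?u = "\<lambda>s. ennreal (\<bar>G k (L n s) - g (L n s)\<bar> powr q)"
      let ?v = "\<lambda>s. ennreal (\<bar>G k (L 1 s) - g (L 1 s)\<bar> powr q)"
      have "X \<le> (\<integral>\<^sup>+ s. ennreal (2 powr q) * (?u s + ?v s) \<partial>lebesgue_on I)"
        unfolding X_def
      proof (rule nn_integral_mono_AE)
        show "AE s in lebesgue_on I. ennreal (\<bar>g (L n s) - c n s * g (L 1 s)\<bar> powr q) \<le> ennreal (2 powr q) * (?u s + ?v s)"
          using Dbound[OF n, of k]
        proof eventually_elim
          case (elim s)
          have "\<bar>g (L n s) - c n s * g (L 1 s)\<bar> powr q \<le> (\<bar>G k (L n s) - g (L n s)\<bar> + \<bar>G k (L 1 s) - g (L 1 s)\<bar>) powr q"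
            using elim q by (intro powr_mono2) auto
          also have "\<dots> \<le> 2 powr q * (\<bar>G k (L n s) - g (L n s)\<bar> powr q + \<bar>G k (L 1 s) - g (L 1 s)\<bar> powr q)"
            using q by (intro powr_sum_le) auto
          finally have r: "\<bar>g (L n s) - c n s * g (L 1 s)\<bar> powr q \<le> 2 powr q * (\<bar>G k (L n s) - g (L n s)\<bar> powr q + \<bar>G k (L 1 s) - g (L 1 s)\<bar> powr q)" .
          have "ennreal (\<bar>g (L n s) - c n s * g (L 1 s)\<bar> powr q) \<le> ennreal (2 powr q * (\<bar>G k (L n s) - g (L n s)\<bar> powr q + \<bar>G k (L 1 s) - g (L 1 s)\<bar> powr q))"
            using r by (rule ennreal_leI)
          also have "\<dots> = ennreal (2 powr q) * (?u s + ?v s)"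
            by (simp add: ennreal_mult ennreal_plus)
          finally show ?case .
        qed
      qed
      also have "\<dots> = ennreal (2 powr q) * ((\<integral>\<^sup>+ s. ?u s \<partial>lebesgue_on I) + (\<integral>\<^sup>+ s. ?v s \<partial>lebesgue_on I))"
        using comp_meas[OF n Fm[of k]] comp_meas[OF one Fm[of k]]
        by (simp add: nn_integral_cmult nn_integral_add)
      also have "\<dots> \<le> ennreal (2 powr q) * (ennreal (1 / La x N n) * S k + ennreal (1 / La x N 1) * S k)"
        unfolding S_def
        by (intro mult_left_mono add_mono nncomp[OF n Fm] nncomp[OF one Fm]) auto
      also have "\<dots> = K * S k" unfolding K_def by (simp add: algebra_simps)
      finally show ?thesis .
    qed
    have "(\<lambda>k. K * S k) \<longlonglongrightarrow> K * 0"
      unfolding K_def by (intro ennreal_tendsto_cmult S0) (simp add: ennreal_mult_less_top ennreal_plus[symmetric] del: ennreal_plus)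
    then have "X \<le> 0"
      by (intro tendsto_le[OF trivial_limit_sequentially _ tendsto_const]) (auto simp: XK)
    then have "X = 0" by simp
    then have "AE s in lebesgue_on I. ennreal (\<bar>g (L n s) - c n s * g (L 1 s)\<bar> powr q) = 0"
      unfolding X_def using Dm[OF n] by (subst (asm) nn_integral_0_iff_AE) (auto intro: measurable)
    then show ?thesis by eventually_elim simp
  qed
  define b where "b s = g s - g (L 1 s) / \<alpha> 1 s" for s
  define K0 where "K0 = (if \<Lambda> = 0 then 0 else 1 / \<Lambda>)"
  have K0: "0 \<le> K0" unfolding K0_def using Lam by auto
  have bpt: "\<bar>b s\<bar> \<le> \<bar>g s\<bar> + K0 * \<bar>g (L 1 s)\<bar>" if "s \<in> I" for s
  proof -
    have "\<bar>g (L 1 s) / \<alpha> 1 s\<bar> = K0 * \<bar>g (L 1 s)\<bar>"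
      using avals[OF one that] Lam unfolding K0_def by (auto simp: abs_divide)
    then show ?thesis unfolding b_def by (metis abs_triangle_ineq4)
  qed
  have bm: "b \<in> borel_measurable (lebesgue_on I)"
    unfolding b_def using comp_meas[OF one gmeas] am[OF one] gmeas
    by (intro borel_measurable_diff borel_measurable_divide) auto
  have bL: "b \<in> Lp_space p I"
  proof (cases "p = \<infinity>")
    case True
    then obtain C where C: "AE t in lebesgue_on I. \<bar>g t\<bar> \<le> C"
      using gL unfolding Lp_space_def IvI by auto
    have "AE s in lebesgue_on I. \<bar>b s\<bar> \<le> C + K0 * C"
      using C AEcomp[OF one C] AEsp
    proof eventually_elim
      case (elim s)
      have "K0 * \<bar>g (L 1 s)\<bar> \<le> K0 * C" using elim(2) K0 by (intro mult_left_mono) auto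
      then show ?case using bpt[OF elim(3)] elim(1) by linarith
    qed
    then show ?thesis using bm True unfolding Lp_space_def by auto
  next
    case False
    define q where "q = enn2real p"
    have q: "0 < q" unfolding q_def using False p_pos by (simp add: enn2real_positive_iff top.not_eq_extremum)
    define Gi where "Gi = (\<integral>\<^sup>+ t. ennreal (\<bar>g t\<bar> powr q) \<partial>lebesgue_on I)"
    have Gi: "Gi < \<infinity>" using gL False unfolding Lp_space_def IvI Gi_def q_def by auto
    have fm: "(\<lambda>t. ennreal (\<bar>g t\<bar> powr q)) \<in> borel_measurable (lebesgue_on I)"
      using gmeas by measurable
    have "(\<integral>\<^sup>+ s. ennreal (\<bar>b s\<bar> powr q) \<partial>lebesgue_on I)
        \<le> (\<integral>\<^sup>+ s. ennreal (2 powr q) * (ennreal (\<bar>g s\<bar> powr q) + ennreal (K0 powr q) * ennreal (\<bar>g (L 1 s)\<bar> powr q)) \<partial>lebesgue_on I)"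
    proof (rule nn_integral_mono)
      fix s assume "s \<in> space (lebesgue_on I)"
      then have s: "s \<in> I" by simp
      have "\<bar>b s\<bar> powr q \<le> (\<bar>g s\<bar> + K0 * \<bar>g (L 1 s)\<bar>) powr q"
        using bpt[OF s] q by (intro powr_mono2) auto
      also have "\<dots> \<le> 2 powr q * (\<bar>g s\<bar> powr q + (K0 * \<bar>g (L 1 s)\<bar>) powr q)"
        using q K0 by (intro powr_sum_le) auto
      also have "(K0 * \<bar>g (L 1 s)\<bar>) powr q = K0 powr q * \<bar>g (L 1 s)\<bar> powr q"
        using K0 by (simp add: powr_mult)
      finally have r: "\<bar>b s\<bar> powr q \<le> 2 powr q * (\<bar>g s\<bar> powr q + K0 powr q * \<bar>g (L 1 s)\<bar> powr q)" .
      have "ennreal (\<bar>b s\<bar> powr q) \<le> ennreal (2 powr q * (\<bar>g s\<bar> powr q + K0 powr q * \<bar>g (L 1 s)\<bar> powr q))"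
        using r by (rule ennreal_leI)
      also have "\<dots> = ennreal (2 powr q) * (ennreal (\<bar>g s\<bar> powr q) + ennreal (K0 powr q) * ennreal (\<bar>g (L 1 s)\<bar> powr q))"
        by (simp add: ennreal_mult ennreal_plus)
      finally show "ennreal (\<bar>b s\<bar> powr q) \<le> ennreal (2 powr q) * (ennreal (\<bar>g s\<bar> powr q) + ennreal (K0 powr q) * ennreal (\<bar>g (L 1 s)\<bar> powr q))" .
    qed
    also have "\<dots> = ennreal (2 powr q) * (Gi + ennreal (K0 powr q) * (\<integral>\<^sup>+ s. ennreal (\<bar>g (L 1 s)\<bar> powr q) \<partial>lebesgue_on I))"
      unfolding Gi_def using comp_meas[OF one fm] fm
      by (simp add: nn_integral_cmult nn_integral_add)
    also have "\<dots> \<le> ennreal (2 powr q) * (Gi + ennreal (K0 powr q) * (ennreal (1 / La x N 1) * Gi))"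
      unfolding Gi_def by (intro mult_left_mono add_mono nncomp[OF one fm]) auto
    also have "\<dots> < \<infinity>"
      using Gi by (simp add: ennreal_mult_less_top)
    finally show ?thesis using bm False unfolding Lp_space_def q_def by auto
  qed
  have "is_fractal p x N \<alpha> (\<lambda>_. 0) b g"
    unfolding is_fractal_def
  proof (intro conjI ballI)
    show "g \<in> Lp_space p (Ival x N)" by (rule gL)
    fix n assume n: "n \<in> {1..N}"
    from AEinv[OF n limit[OF n]]
    show "AE t in lebesgue_on (Ival x N). t \<in> Isub x n \<longrightarrow>
        g t = 0 + \<alpha> n (Linv x N n t) * (g (Linv x N n t) - b (Linv x N n t))"
      unfolding IvI
      by eventually_elim (use part_facts(6)[of N x, OF xinc n] in \<open>auto simp: L_def Li_def b_def c_def\<close>)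
  qed
  then show "\<exists>b \<in> Lp_space p (Ival x N). is_fractal p x N \<alpha> (\<lambda>_. 0) b g"
    using bL IvI by auto
qed


end
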